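(* Let $X\subset U\subset\mathbb{R}^n$, where $U$ is open and $X$ is the closure in $U$ of its interior. Let $f:X\to\mathbb{R}$ and $p\in\mathbb{N}$, and suppose that $\nabla^pf:\tau^p(X)\to\mathbb{R}$. Then there is a $\mathcal{C}^p$ Whitney field $F=(F^\alpha)_{|\alpha|\le p}$ on $X$ such that $F^0=f$.
   Context: $\mathcal{P}_p$: real polynomials on $\mathbb{R}^n$ of degree $\le p$; $\mathcal{P}_p^*$ dual; $r=\dim\mathcal{P}_p$. For $\xi\in\mathcal{P}_p^*$, $b\in\mathbb{R}^n$, $|\alpha|\le p$: $\xi_\alpha(b):=\xi(\tfrac1{\alpha!}(x-b)^\alpha)$; $\delta_a(P)=P(a)$. A bundle over $X$ with fibres in $W$ is a subset of $X\times W$ with linear-subspace fibres. For a bundle $E\subset X\times\mathcal{P}_p^*$: $\Delta E=\{(a,b,\xi+\eta):a,b\in X,\xi\in E_a,\eta\in E_b,|a-b|^{p-|\alpha|}|\eta_\alpha(b)|\le1\ \forall|\alpha|\le p\}$, $E'=\{(a,\xi):(a,a,\xi)\in\overline{\Delta E}\}$, $\rho(E)=\{(a,\xi):\xi\in\operatorname{Span}E'_a\}$; $\tau^p(X):=\rho^{2r}(E_0)$ with $E_0=\{(a,\lambda\delta_a)\}$ (iterates constant from $2r$ on). For bundles $\Phi\subset X\times(\mathcal{P}_p^*\times\mathbb{R})$: $\Delta\Phi=\{(a,b,\xi+\eta,\lambda+\mu):(\xi,\lambda)\in\Phi_a,(\eta,\mu)\in\Phi_b,|a-b|^{p-|\alpha|}|\eta_\alpha(b)|\le1\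 \forall|\alpha|\le p\}$, $\Phi'=\{(a,\xi,\lambda):(a,a,\xi,\lambda)\in\overline{\Delta\Phi}\}$, $\rho(\Phi)$ fibrewise span of $\Phi'$; $\nabla^pf:=\rho^{2(r+1)}(\Phi_0)$ with $\Phi_0=\{(a,\lambda\delta_a,\lambda f(a))\}$. "$\nabla^pf:\tau^p(X)\to\mathbb{R}$" means each $\xi\in\tau^p_a(X)$ has exactly one $\lambda$ with $(a,\xi,\lambda)\in\nabla^pf$. A $\mathcal{C}^p$ Whitney field on $X$ is a family $F=(F^\alpha)_{|\alpha|\le p}$ of functions $X\to\mathbb{R}$ such that for every $c\in X$ and $|\alpha|\le p$, $\big(F^\alpha(b)-\sum_{|\beta|\le p-|\alpha|}\frac1{\beta!}F^{\alpha+\beta}(a)(b-a)^\beta\big)/|b-a|^{p-|\alpha|}\to0$ as $a,b\to c$ in $X$, $a\ne b$. *)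

theory Defs
  imports "HOL-Analysis.Analysis"
begin

(* Multi-indices on R^n (n = CARD('n)) are functions 'n => nat.
   The space P_p of polynomials of degree <= p has basis the monomials x^beta, |beta| <= p.
   A polynomial is represented by its coefficient function beta |-> coefficient of x^beta.
   A dual element xi in P_p^* is represented by the function beta |-> xi(x^beta)
   (zero outside |beta| <= p); the pairing is  xi(P) = sum_{|beta|<=p} xi(x^beta) * coeff_beta(P).
   The topology on P_p^* is the (product = pointwise) topology on functions, which on the
   finite-dimensional space of functions supported in {|beta| <= p} is the Euclidean one. *)

definition mideg :: "('n::finite \<Rightarrow> nat) \<Rightarrow> nat" where
  "mideg \<alpha> = (\<Sum>i\<in>UNIV. \<alpha> i)"

definition MI :: "nat \<Rightarrow> ('n::finite \<Rightarrow> nat) set" where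
  "MI p = {\<alpha>. mideg \<alpha> \<le> p}"

definition mifact :: "('n::finite \<Rightarrow> nat) \<Rightarrow> real" where
  "mifact \<alpha> = (\<Prod>i\<in>UNIV. fact (\<alpha> i))"

definition mipow :: "real^'n::finite \<Rightarrow> ('n \<Rightarrow> nat) \<Rightarrow> real" where
  "mipow x \<alpha> = (\<Prod>i\<in>UNIV. (x$i) ^ (\<alpha> i))"

definition dpair :: "nat \<Rightarrow> (('n::finite \<Rightarrow> nat) \<Rightarrow> real) \<Rightarrow> (('n \<Rightarrow> nat) \<Rightarrow> real) \<Rightarrow> real" where
  "dpair p \<xi> P = (\<Sum>\<beta>\<in>MI p. \<xi> \<beta> * P \<beta>)"

text \<open>coefficients of the polynomial (x - b)^alpha / alpha! (binomial expansion)\<close>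
definition smon :: "real^'n::finite \<Rightarrow> ('n \<Rightarrow> nat) \<Rightarrow> ('n \<Rightarrow> nat) \<Rightarrow> real" where
  "smon b \<alpha> \<beta> = (if (\<forall>i. \<beta> i \<le> \<alpha> i)
      then (\<Prod>i\<in>UNIV. real (\<alpha> i choose \<beta> i) * (- (b$i)) ^ (\<alpha> i - \<beta> i)) / mifact \<alpha>
      else 0)"

definition dcomp :: "nat \<Rightarrow> (('n::finite \<Rightarrow> nat) \<Rightarrow> real) \<Rightarrow> ('n \<Rightarrow> nat) \<Rightarrow> (real^'n) \<Rightarrow> real" where
  "dcomp p \<xi> \<alpha> b = dpair p \<xi> (smon b \<alpha>)"

definition delta :: "nat \<Rightarrow> real^'n::finite \<Rightarrow> ('n \<Rightarrow> nat) \<Rightarrow> real" where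
  "delta p a = (\<lambda>\<beta>. if \<beta> \<in> MI p then mipow a \<beta> else 0)"

definition DeltaB :: "nat \<Rightarrow> (real^'n::finite) set \<Rightarrow> ((real^'n) \<times> (('n \<Rightarrow> nat) \<Rightarrow> real)) set
    \<Rightarrow> ((real^'n) \<times> (real^'n) \<times> (('n \<Rightarrow> nat) \<Rightarrow> real)) set" where
  "DeltaB p X E = {(a, b, \<zeta>). a \<in> X \<and> b \<in> X \<and>
     (\<exists>\<xi> \<eta>. (a, \<xi>) \<in> E \<and> (b, \<eta>) \<in> E \<and> \<zeta> = (\<lambda>\<beta>. \<xi> \<beta> + \<eta> \<beta>) \<and>
        (\<forall>\<alpha>\<in>MI p. norm (a - b) ^ (p - mideg \<alpha>) * \<bar>dcomp p \<eta> \<alpha> b\<bar> \<le> 1))}"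

definition primeB :: "nat \<Rightarrow> (real^'n::finite) set \<Rightarrow> ((real^'n) \<times> (('n \<Rightarrow> nat) \<Rightarrow> real)) set
    \<Rightarrow> ((real^'n) \<times> (('n \<Rightarrow> nat) \<Rightarrow> real)) set" where
  "primeB p X E = {(a, \<xi>). a \<in> X \<and> (a, a, \<xi>) \<in> closure (DeltaB p X E)}"

text \<open>fibrewise linear span (finite linear combinations; span of the empty set is {0})\<close>
definition rhoB :: "nat \<Rightarrow> (real^'n::finite) set \<Rightarrow> ((real^'n) \<times> (('n \<Rightarrow> nat) \<Rightarrow> real)) set
    \<Rightarrow> ((real^'n) \<times> (('n \<Rightarrow> nat) \<Rightarrow> real)) set" where
  "rhoB p X E = {(a, \<xi>). a \<in> X \<and>
     (\<exists>S c. finite S \<and> S \<subseteq> {\<eta>. (a, \<eta>) \<in> primeB p X E} \<and>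
        \<xi> = (\<lambda>\<beta>. \<Sum>\<eta>\<in>S. c \<eta> * \<eta> \<beta>))}"

definition E0 :: "nat \<Rightarrow> (real^'n::finite) set \<Rightarrow> ((real^'n) \<times> (('n \<Rightarrow> nat) \<Rightarrow> real)) set" where
  "E0 p X = {(a, (\<lambda>\<beta>. l * delta p a \<beta>)) | a l. a \<in> X}"

definition rdim :: "nat \<Rightarrow> (real^'n::finite) set \<Rightarrow> nat" where
  "rdim p X = card (MI p :: ('n \<Rightarrow> nat) set)"

definition tau :: "nat \<Rightarrow> (real^'n::finite) set \<Rightarrow> ((real^'n) \<times> (('n \<Rightarrow> nat) \<Rightarrow> real)) set" where
  "tau p X = (rhoB p X ^^ (2 * rdim p X)) (E0 p X)"

definition DeltaF :: "nat \<Rightarrow> (real^'n::finite) set \<Rightarrow> ((real^'n) \<times> (('n \<Rightarrow> nat) \<Rightarrow> real) \<times> real) set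
    \<Rightarrow> ((real^'n) \<times> (real^'n) \<times> (('n \<Rightarrow> nat) \<Rightarrow> real) \<times> real) set" where
  "DeltaF p X \<Phi> = {(a, b, \<zeta>, \<nu>). a \<in> X \<and> b \<in> X \<and>
     (\<exists>\<xi> l \<eta> m. (a, \<xi>, l) \<in> \<Phi> \<and> (b, \<eta>, m) \<in> \<Phi> \<and> \<zeta> = (\<lambda>\<beta>. \<xi> \<beta> + \<eta> \<beta>) \<and> \<nu> = l + m \<and>
        (\<forall>\<alpha>\<in>MI p. norm (a - b) ^ (p - mideg \<alpha>) * \<bar>dcomp p \<eta> \<alpha> b\<bar> \<le> 1))}"

definition primeF :: "nat \<Rightarrow> (real^'n::finite) set \<Rightarrow> ((real^'n) \<times> (('n \<Rightarrow> nat) \<Rightarrow> real) \<times> real) set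
    \<Rightarrow> ((real^'n) \<times> (('n \<Rightarrow> nat) \<Rightarrow> real) \<times> real) set" where
  "primeF p X \<Phi> = {(a, \<xi>, l). a \<in> X \<and> (a, a, \<xi>, l) \<in> closure (DeltaF p X \<Phi>)}"

definition rhoF :: "nat \<Rightarrow> (real^'n::finite) set \<Rightarrow> ((real^'n) \<times> (('n \<Rightarrow> nat) \<Rightarrow> real) \<times> real) set
    \<Rightarrow> ((real^'n) \<times> (('n \<Rightarrow> nat) \<Rightarrow> real) \<times> real) set" where
  "rhoF p X \<Phi> = {(a, \<xi>, l). a \<in> X \<and>
     (\<exists>S c. finite S \<and> S \<subseteq> {(\<eta>, m). (a, \<eta>, m) \<in> primeF p X \<Phi>} \<and>
        \<xi> = (\<lambda>\<beta>. \<Sum>s\<in>S. c s * fst s \<beta>) \<and> l = (\<Sum>s\<in>S. c s * snd s))}"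

definition Phi0 :: "nat \<Rightarrow> (real^'n::finite) set \<Rightarrow> ((real^'n) \<Rightarrow> real) \<Rightarrow> ((real^'n) \<times> (('n \<Rightarrow> nat) \<Rightarrow> real) \<times> real) set" where
  "Phi0 p X f = {(a, (\<lambda>\<beta>. l * delta p a \<beta>), l * f a) | a l. a \<in> X}"

definition nabla :: "nat \<Rightarrow> (real^'n::finite) set \<Rightarrow> ((real^'n) \<Rightarrow> real) \<Rightarrow> ((real^'n) \<times> (('n \<Rightarrow> nat) \<Rightarrow> real) \<times> real) set" where
  "nabla p X f = (rhoF p X ^^ (2 * (rdim p X + 1))) (Phi0 p X f)"

definition nabla_is_function :: "nat \<Rightarrow> (real^'n::finite) set \<Rightarrow> ((real^'n) \<Rightarrow> real) \<Rightarrow> bool" where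
  "nabla_is_function p X f \<longleftrightarrow>
     (\<forall>a \<xi>. (a, \<xi>) \<in> tau p X \<longrightarrow> (\<exists>!l. (a, \<xi>, l) \<in> nabla p X f))"

definition whitney_field :: "nat \<Rightarrow> (real^'n::finite) set \<Rightarrow> (('n \<Rightarrow> nat) \<Rightarrow> (real^'n) \<Rightarrow> real) \<Rightarrow> bool" where
  "whitney_field p X F \<longleftrightarrow>
     (\<forall>c\<in>X. \<forall>\<alpha>\<in>MI p.
        ((\<lambda>(a, b). (F \<alpha> b - (\<Sum>\<beta>\<in>MI (p - mideg \<alpha>).
              F (\<lambda>i. \<alpha> i + \<beta> i) a * mipow (b - a) \<beta> / mifact \<beta>))
            / norm (b - a) ^ (p - mideg \<alpha>)) \<longlongrightarrow> 0)
        (at (c, c) within {(a, b). a \<in> X \<and> b \<in> X \<and> a \<noteq> b}))"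

end

theory Submission
  imports Defs "HOL-Library.FuncSet"
begin


definition Phk :: "nat \<Rightarrow> (real^'n::finite) set \<Rightarrow> ((real^'n) \<Rightarrow> real) \<Rightarrow> nat \<Rightarrow> ((real^'n) \<times> (('n \<Rightarrow> nat) \<Rightarrow> real) \<times> real) set" where
  "Phk p X f k = (rhoF p X ^^ k) (Phi0 p X f)"

lemma rhoF_zero: "a \<in> X \<Longrightarrow> (a, (\<lambda>\<beta>. 0), 0) \<in> rhoF p X \<Phi>"
  unfolding rhoF_def by (auto intro!: exI[of _ "{}"])

lemma rhoF_X: "(a, \<xi>, l) \<in> rhoF p X \<Phi> \<Longrightarrow> a \<in> X"
  unfolding rhoF_def by auto

lemma Phi0_zero: "a \<in> X \<Longrightarrow> (a, (\<lambda>\<beta>. 0), 0) \<in> Phi0 p X f"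
  unfolding Phi0_def by (auto intro!: exI[of _ 0])

lemma Phi0_X: "(a, \<xi>, l) \<in> Phi0 p X f \<Longrightarrow> a \<in> X"
  unfolding Phi0_def by auto

lemma Phk_zero: "a \<in> X \<Longrightarrow> (a, (\<lambda>\<beta>. 0), 0) \<in> Phk p X f k"
  unfolding Phk_def by (cases k) (auto simp: rhoF_zero Phi0_zero)

lemma Phk_X: "(a, \<xi>, l) \<in> Phk p X f k \<Longrightarrow> a \<in> X"
  unfolding Phk_def by (cases k) (auto dest: rhoF_X Phi0_X)

lemma dcomp_zero: "dcomp p (\<lambda>\<beta>. 0) \<alpha> b = 0"
  unfolding dcomp_def dpair_def by simp

lemma dcomp_scale: "dcomp p (\<lambda>\<beta>. t * \<eta> \<beta>) \<alpha> b = t * dcomp p \<eta> \<alpha> b"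
  unfolding dcomp_def dpair_def by (simp add: sum_distrib_left mult.assoc)

lemma primeF_rhoF: "(a, \<xi>, l) \<in> primeF p X \<Phi> \<Longrightarrow> (a, \<xi>, l) \<in> rhoF p X \<Phi>"
proof -
  assume H: "(a, \<xi>, l) \<in> primeF p X \<Phi>"
  have "a \<in> X" using H by (simp add: primeF_def)
  moreover have "\<xi> = (\<lambda>\<beta>. \<Sum>s\<in>{(\<xi>, l)}. 1 * fst s \<beta>) \<and> l = (\<Sum>s\<in>{(\<xi>, l)}. 1 * snd s)" by simp
  ultimately show ?thesis unfolding rhoF_def using H
    by (intro CollectI, simp only: case_prod_conv) (intro conjI exI[of _ "{(\<xi>, l)}"] exI[of _ "\<lambda>_. 1"], auto)
qed

lemma DeltaF_I:
  assumes "a \<in> X" "b \<in> X" "(a, \<xi>, l) \<in> \<Phi>" "(b, \<eta>, m) \<in> \<Phi>"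
    "\<forall>\<alpha>\<in>MI p. norm (a - b) ^ (p - mideg \<alpha>) * \<bar>dcomp p \<eta> \<alpha> b\<bar> \<le> 1"
  shows "(a, b, (\<lambda>\<beta>. \<xi> \<beta> + \<eta> \<beta>), l + m) \<in> DeltaF p X \<Phi>"
  unfolding DeltaF_def using assms by blast

lemma self_primeF:
  assumes "(a, \<xi>, l) \<in> \<Phi>" "a \<in> X" "(a, (\<lambda>\<beta>. 0), 0) \<in> \<Phi>"
  shows "(a, \<xi>, l) \<in> primeF p X \<Phi>"
proof -
  have "(a, a, \<xi>, l) \<in> DeltaF p X \<Phi>"
    using DeltaF_I[of a X a \<xi> l \<Phi> "\<lambda>\<beta>. 0" 0 p] assms by (simp add: dcomp_zero)
  then show ?thesis unfolding primeF_def using assms closure_subset by auto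
qed

lemma Phk_Suc_mono: "Phk p X f k \<subseteq> Phk p X f (Suc k)"
proof
  fix x assume x: "x \<in> Phk p X f k"
  obtain a \<xi> l where xe: "x = (a, \<xi>, l)" by (cases x) auto
  have aX: "a \<in> X" using x xe Phk_X by blast
  have "(a, \<xi>, l) \<in> primeF p X (Phk p X f k)"
    by (rule self_primeF) (use x xe aX Phk_zero in auto)
  then show "x \<in> Phk p X f (Suc k)" using xe primeF_rhoF by (simp add: Phk_def)
qed

lemma Phk_mono: "k \<le> m \<Longrightarrow> Phk p X f k \<subseteq> Phk p X f m"
  by (induction m rule: dec_induct) (use Phk_Suc_mono in blast)+

lemma rhoF_scale:
  assumes "(a, \<xi>, l) \<in> rhoF p X \<Phi>"
  shows "(a, (\<lambda>\<beta>. t * \<xi> \<beta>), t * l) \<in> rhoF p X \<Phi>"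
proof -
  from assms obtain S c where S: "a \<in> X" "finite S" "S \<subseteq> {(\<eta>, m). (a, \<eta>, m) \<in> primeF p X \<Phi>}"
     "\<xi> = (\<lambda>\<beta>. \<Sum>s\<in>S. c s * fst s \<beta>)" "l = (\<Sum>s\<in>S. c s * snd s)"
    unfolding rhoF_def by auto
  show ?thesis unfolding rhoF_def using S
    by (auto intro!: exI[of _ S] exI[of _ "\<lambda>s. t * c s"] simp: sum_distrib_left mult.assoc)
qed

lemma rhoF_add:
  assumes "(a, \<xi>, l) \<in> rhoF p X \<Phi>" "(a, \<xi>', l') \<in> rhoF p X \<Phi>"
  shows "(a, (\<lambda>\<beta>. \<xi> \<beta> + \<xi>' \<beta>), l + l') \<in> rhoF p X \<Phi>"
proof -
  from assms(1) obtain S c where S: "a \<in> X" "finite S" "S \<subseteq> {(\<eta>, m). (a, \<eta>, m) \<in> primeF p X \<Phi>}"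
     "\<xi> = (\<lambda>\<beta>. \<Sum>s\<in>S. c s * fst s \<beta>)" "l = (\<Sum>s\<in>S. c s * snd s)"
    unfolding rhoF_def by auto
  from assms(2) obtain S' c' where S': "finite S'" "S' \<subseteq> {(\<eta>, m). (a, \<eta>, m) \<in> primeF p X \<Phi>}"
     "\<xi>' = (\<lambda>\<beta>. \<Sum>s\<in>S'. c' s * fst s \<beta>)" "l' = (\<Sum>s\<in>S'. c' s * snd s)"
    unfolding rhoF_def by auto
  define d where "d s = (if s \<in> S then c s else 0) + (if s \<in> S' then c' s else 0)" for s
  have e1: "(\<Sum>s\<in>S \<union> S'. d s * g s) = (\<Sum>s\<in>S. c s * g s) + (\<Sum>s\<in>S'. c' s * g s)" for g :: "_ \<Rightarrow> real"
  proof -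
    have "(\<Sum>s\<in>S \<union> S'. d s * g s) = (\<Sum>s\<in>S \<union> S'. (if s \<in> S then c s * g s else 0) + (if s \<in> S' then c' s * g s else 0))"
      unfolding d_def by (intro sum.cong) (auto simp: distrib_right)
    also have "\<dots> = (\<Sum>s\<in>S \<union> S'. (if s \<in> S then c s * g s else 0)) + (\<Sum>s\<in>S \<union> S'. (if s \<in> S' then c' s * g s else 0))"
      by (simp add: sum.distrib)
    also have "\<dots> = (\<Sum>s\<in>S. c s * g s) + (\<Sum>s\<in>S'. c' s * g s)"
      using S S' by (simp add: sum.If_cases Int_absorb1 Int_absorb2)
    finally show ?thesis .
  qed
  show ?thesis unfolding rhoF_def using S S'
    by (auto intro!: exI[of _ "S \<union> S'"] exI[of _ d] simp: e1)
qed

lemma rhoF_sum: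
  assumes "finite B" "\<And>x. x \<in> B \<Longrightarrow> (a, G x, L x) \<in> rhoF p X \<Phi>" "a \<in> X"
  shows "(a, (\<lambda>\<beta>. \<Sum>x\<in>B. w x * G x \<beta>), (\<Sum>x\<in>B. w x * L x)) \<in> rhoF p X \<Phi>"
  using assms
proof (induction B rule: finite_induct)
  case empty
  then show ?case using rhoF_zero by simp
next
  case (insert x F)
  have "(a, (\<lambda>\<beta>. w x * G x \<beta> + (\<Sum>x\<in>F. w x * G x \<beta>)), w x * L x + (\<Sum>x\<in>F. w x * L x)) \<in> rhoF p X \<Phi>"
    by (rule rhoF_add[OF rhoF_scale]) (use insert in auto)
  then show ?case using insert by simp
qed

lemma DeltaF_scale:
  assumes "(a, b, \<zeta>, \<nu>) \<in> DeltaF p X (rhoF p X \<Psi>)" "\<bar>t\<bar> \<le> 1"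
  shows "(a, b, (\<lambda>\<beta>. t * \<zeta> \<beta>), t * \<nu>) \<in> DeltaF p X (rhoF p X \<Psi>)"
proof -
  from assms(1) obtain \<xi> l \<eta> m where H: "a \<in> X" "b \<in> X" "(a, \<xi>, l) \<in> rhoF p X \<Psi>" "(b, \<eta>, m) \<in> rhoF p X \<Psi>"
    "\<zeta> = (\<lambda>\<beta>. \<xi> \<beta> + \<eta> \<beta>)" "\<nu> = l + m"
    "\<forall>\<alpha>\<in>MI p. norm (a - b) ^ (p - mideg \<alpha>) * \<bar>dcomp p \<eta> \<alpha> b\<bar> \<le> 1"
    unfolding DeltaF_def by auto
  have c: "norm (a - b) ^ (p - mideg \<alpha>) * \<bar>dcomp p (\<lambda>\<beta>. t * \<eta> \<beta>) \<alpha> b\<bar> \<le> 1" if "\<alpha> \<in> MI p" for \<alpha>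
  proof -
    have "norm (a - b) ^ (p - mideg \<alpha>) * \<bar>dcomp p (\<lambda>\<beta>. t * \<eta> \<beta>) \<alpha> b\<bar>
       = \<bar>t\<bar> * (norm (a - b) ^ (p - mideg \<alpha>) * \<bar>dcomp p \<eta> \<alpha> b\<bar>)"
      by (simp add: dcomp_scale abs_mult)
    also have "\<dots> \<le> 1 * 1"
      using H(7) that assms(2) by (intro mult_mono) auto
    finally show ?thesis by simp
  qed
  have "(a, b, (\<lambda>\<beta>. t * \<xi> \<beta> + t * \<eta> \<beta>), t * l + t * m) \<in> DeltaF p X (rhoF p X \<Psi>)"
    by (rule DeltaF_I) (use H c rhoF_scale in auto)
  then show ?thesis using H by (simp add: distrib_left)
qed

lemma tendsto_fun_pointwise:
  fixes f :: "'a \<Rightarrow> 'i \<Rightarrow> 'b::topological_space"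
  assumes "\<And>i. ((\<lambda>x. f x i) \<longlongrightarrow> l i) F"
  shows "(f \<longlongrightarrow> l) F"
proof -
  have "limitin (product_topology (\<lambda>i. euclidean) UNIV) f l F"
    unfolding limitin_componentwise using assms by auto
  then show ?thesis by (simp add: euclidean_product_topology)
qed

lemma E_zero: "a \<in> X \<Longrightarrow> (a, (\<lambda>\<beta>. 0)) \<in> (rhoB p X ^^ k) (E0 p X)"
  by (cases k) (auto simp: rhoB_def E0_def intro!: exI[of _ "{}"] exI[of _ 0])



lemma core:
  fixes a b :: "nat \<Rightarrow> real^'n::finite" and \<zeta> :: "nat \<Rightarrow> ('n \<Rightarrow> nat) \<Rightarrow> real"
  assumes "c \<in> X" "a \<longlonglongrightarrow> c" "b \<longlonglongrightarrow> c"
    "\<And>k. (a k, b k, \<zeta> k, \<nu> k) \<in> DeltaF p X (rhoF p X \<Psi>)"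
    "\<And>\<beta>. (\<lambda>k. \<zeta> k \<beta>) \<longlonglongrightarrow> D \<beta>"
  shows "\<exists>s w. 0 \<le> s \<and> (c, (\<lambda>\<beta>. s * D \<beta>), w) \<in> rhoF p X (rhoF p X \<Psi>) \<and> (s = 0 \<longrightarrow> \<bar>w\<bar> = 1)
     \<and> (\<forall>e. (\<forall>k. e \<le> \<bar>\<nu> k\<bar>) \<longrightarrow> min e 1 \<le> \<bar>w\<bar>)"
proof -
  define sk where "sk k = 1 / max 1 \<bar>\<nu> k\<bar>" for k
  define wk where "wk k = sk k * \<nu> k" for k
  have sk_pos: "0 < sk k" and sk_le: "sk k \<le> 1" for k unfolding sk_def by auto
  have wk_le: "\<bar>wk k\<bar> \<le> 1" for k
    unfolding wk_def sk_def by (auto simp: abs_mult field_simps)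
  have wk_one: "sk k < 1 \<Longrightarrow> \<bar>wk k\<bar> = 1" for k
    unfolding wk_def sk_def by (auto simp: abs_mult field_simps split: if_splits)
  have wk_ge: "(\<forall>k. e \<le> \<bar>\<nu> k\<bar>) \<Longrightarrow> min e 1 \<le> \<bar>wk k\<bar>" for e k
    unfolding wk_def sk_def by (cases "\<bar>\<nu> k\<bar> \<le> 1") (auto simp: abs_mult field_simps min_le_iff_disj)
  have "bounded (range (\<lambda>k. (sk k, wk k)))"
  proof (rule bounded_subset)
    show "bounded ({0..1::real} \<times> {-1..1::real})" by (intro bounded_Times bounded_closed_interval)
    show "range (\<lambda>k. (sk k, wk k)) \<subseteq> {0..1} \<times> {-1..1}"
      using sk_pos sk_le wk_le by (auto simp: abs_le_iff less_imp_le)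
  qed
  then obtain l r where r: "strict_mono r" and lim: "((\<lambda>k. (sk k, wk k)) \<circ> r) \<longlonglongrightarrow> l"
    using bounded_imp_convergent_subsequence by blast
  obtain s w where l: "l = (s, w)" by (cases l)
  have ls: "(\<lambda>k. sk (r k)) \<longlonglongrightarrow> s" using tendsto_fst[OF lim] l by (simp add: o_def)
  have lw: "(\<lambda>k. wk (r k)) \<longlonglongrightarrow> w" using tendsto_snd[OF lim] l by (simp add: o_def)
  have mem: "(a (r k), b (r k), (\<lambda>\<beta>. sk (r k) * \<zeta> (r k) \<beta>), wk (r k)) \<in> DeltaF p X (rhoF p X \<Psi>)" for k
    unfolding wk_def using DeltaF_scale[OF assms(4)[of "r k"], of "sk (r k)"] sk_pos[of "r k"] sk_le[of "r k"] by auto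
  have la: "(\<lambda>k. a (r k)) \<longlonglongrightarrow> c" using LIMSEQ_subseq_LIMSEQ[OF assms(2) r] by (simp add: o_def)
  have lb: "(\<lambda>k. b (r k)) \<longlonglongrightarrow> c" using LIMSEQ_subseq_LIMSEQ[OF assms(3) r] by (simp add: o_def)
  have lz: "(\<lambda>k. (\<lambda>\<beta>. sk (r k) * \<zeta> (r k) \<beta>)) \<longlonglongrightarrow> (\<lambda>\<beta>. s * D \<beta>)"
  proof (rule tendsto_fun_pointwise)
    fix \<beta>
    have "(\<lambda>k. \<zeta> (r k) \<beta>) \<longlonglongrightarrow> D \<beta>" using LIMSEQ_subseq_LIMSEQ[OF assms(5) r] by (simp add: o_def)
    then show "(\<lambda>k. sk (r k) * \<zeta> (r k) \<beta>) \<longlonglongrightarrow> s * D \<beta>" by (intro tendsto_mult ls)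
  qed
  have "(\<lambda>k. (a (r k), b (r k), (\<lambda>\<beta>. sk (r k) * \<zeta> (r k) \<beta>), wk (r k))) \<longlonglongrightarrow> (c, c, (\<lambda>\<beta>. s * D \<beta>), w)"
    by (intro tendsto_Pair la lb lz lw)
  then have "(c, c, (\<lambda>\<beta>. s * D \<beta>), w) \<in> closure (DeltaF p X (rhoF p X \<Psi>))"
    by (intro Lim_in_closed_set[of _ _ sequentially]) (use mem closure_subset in \<open>auto intro!: always_eventually\<close>)
  then have in1: "(c, (\<lambda>\<beta>. s * D \<beta>), w) \<in> rhoF p X (rhoF p X \<Psi>)"
    using assms(1) by (intro primeF_rhoF) (simp add: primeF_def)
  have s0: "0 \<le> s" using ls sk_pos by (intro LIMSEQ_le_const) (auto intro: less_imp_le)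
  have sw: "\<bar>w\<bar> = 1" if "s = 0"
  proof -
    have "eventually (\<lambda>k. sk (r k) < 1) sequentially"
      using ls that by (intro order_tendstoD) auto
    then have ev: "eventually (\<lambda>k. \<bar>wk (r k)\<bar> = 1) sequentially"
      by eventually_elim (rule wk_one)
    have "(\<lambda>k. \<bar>wk (r k)\<bar>) \<longlonglongrightarrow> \<bar>w\<bar>" by (intro tendsto_rabs lw)
    moreover have "(\<lambda>k. \<bar>wk (r k)\<bar>) \<longlonglongrightarrow> 1"
      using ev by (simp add: tendsto_eventually)
    ultimately show ?thesis by (rule LIMSEQ_unique)
  qed
  have we: "min e 1 \<le> \<bar>w\<bar>" if "\<forall>k. e \<le> \<bar>\<nu> k\<bar>" for e
  proof -
    have "(\<lambda>k. \<bar>wk (r k)\<bar>) \<longlonglongrightarrow> \<bar>w\<bar>" by (intro tendsto_rabs lw)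
    then show ?thesis by (rule LIMSEQ_le_const) (use wk_ge that in auto)
  qed
  show ?thesis using in1 s0 sw we by blast
qed



lemma binom_fact_sum:
  fixes u v :: real
  shows "(\<Sum>k\<le>m. (u ^ k / fact k) * (v ^ (m - k) / fact (m - k))) = (u + v) ^ m / fact m"
proof -
  have "(u + v) ^ m / fact m = (\<Sum>k\<le>m. real (m choose k) * u ^ k * v ^ (m - k)) / fact m"
    by (simp add: binomial_ring)
  also have "\<dots> = (\<Sum>k\<le>m. real (m choose k) * u ^ k * v ^ (m - k) / fact m)"
    by (simp add: sum_divide_distrib)
  also have "\<dots> = (\<Sum>k\<le>m. (u ^ k / fact k) * (v ^ (m - k) / fact (m - k)))"
  proof (intro sum.cong refl)
    fix k assume "k \<in> {..m}"
    then have "k \<le> m" by simp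
    then show "real (m choose k) * u ^ k * v ^ (m - k) / fact m = (u ^ k / fact k) * (v ^ (m - k) / fact (m - k))"
      by (simp add: binomial_fact)
  qed
  finally show ?thesis by simp
qed

lemma L1:
  fixes y :: real
  shows "(\<Sum>k\<le>a. (if g \<le> k then fact k / fact (k - g) * y ^ (k - g) else 0) * (real (a choose k) * (- y) ^ (a - k)) / fact a)
     = (if a = g then 1 else 0)"
proof (cases "g \<le> a")
  case False
  then show ?thesis by (intro trans[OF sum.neutral]) auto
next
  case True
  define n where "n = a - g"
  have "(\<Sum>k\<le>a. (if g \<le> k then fact k / fact (k - g) * y ^ (k - g) else 0) * (real (a choose k) * (- y) ^ (a - k)) / fact a)
     = (\<Sum>k\<in>{g..a}. fact k / fact (k - g) * y ^ (k - g) * (real (a choose k) * (- y) ^ (a - k)) / fact a)"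
    by (rule sum.mono_neutral_cong_right) auto
  also have "\<dots> = (\<Sum>j\<in>{0..n}. fact (j + g) / fact (j + g - g) * y ^ (j + g - g) * (real (a choose (j + g)) * (- y) ^ (a - (j + g))) / fact a)"
    using sum.shift_bounds_cl_nat_ivl[of "\<lambda>k. fact k / fact (k - g) * y ^ (k - g) * (real (a choose k) * (- y) ^ (a - k)) / fact a" 0 g n]
    using True by (simp add: n_def)
  also have "\<dots> = (\<Sum>j\<le>n. (y ^ j / fact j) * ((- y) ^ (n - j) / fact (n - j)))"
  proof (intro sum.cong)
    fix j assume "j \<in> {..n}"
    then have j: "j \<le> n" by simp
    have "j + g \<le> a" using j True n_def by simp
    then have "real (a choose (j + g)) = fact a / (fact (j + g) * fact (a - (j + g)))" by (simp add: binomial_fact)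
    moreover have "a - (j + g) = n - j" using n_def by simp
    ultimately show "fact (j + g) / fact (j + g - g) * y ^ (j + g - g) * (real (a choose (j + g)) * (- y) ^ (a - (j + g))) / fact a
        = (y ^ j / fact j) * ((- y) ^ (n - j) / fact (n - j))"
      by (simp add: field_simps)
  qed (auto simp: atLeast0AtMost)
  also have "\<dots> = (y + - y) ^ n / fact n" by (rule binom_fact_sum)
  also have "\<dots> = (if a = g then 1 else 0)"
    using True by (simp add: n_def)
  finally show ?thesis .
qed

lemma L2:
  fixes a b :: real
  assumes "al \<le> d"
  shows "(\<Sum>k\<le>d - al. ((b - a) ^ k / fact k) * (fact d / fact (d - al - k) * a ^ (d - al - k)))
     = fact d / fact (d - al) * b ^ (d - al)"
proof -
  have "(\<Sum>k\<le>d - al. ((b - a) ^ k / fact k) * (fact d / fact (d - al - k) * a ^ (d - al - k)))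
     = fact d * (\<Sum>k\<le>d - al. ((b - a) ^ k / fact k) * (a ^ (d - al - k) / fact (d - al - k)))"
    by (simp add: sum_distrib_left field_simps)
  also have "\<dots> = fact d * ((b - a + a) ^ (d - al) / fact (d - al))" by (simp only: binom_fact_sum)
  finally show ?thesis by simp
qed



definition mbox :: "('n::finite \<Rightarrow> nat) \<Rightarrow> ('n \<Rightarrow> nat) set" where
  "mbox \<alpha> = {\<beta>. \<forall>i. \<beta> i \<le> \<alpha> i}"

lemma mbox_PiE: "mbox \<alpha> = PiE UNIV (\<lambda>i. {..\<alpha> i})"
  unfolding mbox_def PiE_UNIV_domain by auto

lemma finite_mbox: "finite (mbox \<alpha>)"
  unfolding mbox_PiE by (intro finite_PiE) auto

lemma mideg_mono: "(\<forall>i. \<beta> i \<le> \<alpha> i) \<Longrightarrow> mideg \<beta> \<le> mideg \<alpha>"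
  unfolding mideg_def by (intro sum_mono) auto

lemma mideg_add: "mideg (\<lambda>i. \<alpha> i + \<beta> i) = mideg \<alpha> + mideg \<beta>"
  unfolding mideg_def by (simp add: sum.distrib)

lemma mideg_diff: "(\<forall>i. \<beta> i \<le> \<alpha> i) \<Longrightarrow> mideg (\<lambda>i. \<alpha> i - \<beta> i) = mideg \<alpha> - mideg \<beta>"
proof -
  assume H: "\<forall>i. \<beta> i \<le> \<alpha> i"
  have "mideg (\<lambda>i. \<alpha> i - \<beta> i) + mideg \<beta> = mideg \<alpha>"
    unfolding mideg_add[symmetric] using H by (simp add: mideg_def)
  then show ?thesis by simp
qed

lemma mbox_MI: "mideg \<alpha> \<le> p \<Longrightarrow> mbox \<alpha> \<subseteq> MI p"
  unfolding mbox_def MI_def using mideg_mono order_trans by blast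

lemma finite_MI: "finite (MI p :: ('n::finite \<Rightarrow> nat) set)"
proof -
  have "MI p \<subseteq> mbox (\<lambda>_::'n. p)"
  proof
    fix \<beta> :: "'n \<Rightarrow> nat" assume "\<beta> \<in> MI p"
    then have "mideg \<beta> \<le> p" by (simp add: MI_def)
    moreover have "\<beta> i \<le> mideg \<beta>" for i unfolding mideg_def by (rule member_le_sum) auto
    ultimately show "\<beta> \<in> mbox (\<lambda>_. p)" unfolding mbox_def using order_trans by blast
  qed
  then show ?thesis using finite_mbox finite_subset by blast
qed

definition Cg :: "('n::finite \<Rightarrow> nat) \<Rightarrow> ('n \<Rightarrow> nat) \<Rightarrow> real" where
  "Cg \<gamma> \<delta> = (\<Prod>i\<in>UNIV. fact (\<delta> i) / fact (\<delta> i - \<gamma> i))"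

definition Dg :: "nat \<Rightarrow> ('n::finite \<Rightarrow> nat) \<Rightarrow> real^'n \<Rightarrow> ('n \<Rightarrow> nat) \<Rightarrow> real" where
  "Dg p \<gamma> a \<delta> = (if \<delta> \<in> MI p \<and> (\<forall>i. \<gamma> i \<le> \<delta> i) then Cg \<gamma> \<delta> * mipow a (\<lambda>i. \<delta> i - \<gamma> i) else 0)"

lemma Dg_zero: "Dg p (\<lambda>i. 0) a = delta p a"
  unfolding Dg_def delta_def Cg_def by (auto intro!: ext)

lemma A1:
  fixes b :: "real^'n::finite"
  assumes "\<alpha> \<in> MI p"
  shows "dcomp p (Dg p \<gamma> b) \<alpha> b = (if \<alpha> = \<gamma> then 1 else 0)"
proof -
  define g where "g i k = (if \<gamma> i \<le> k then fact k / fact (k - \<gamma> i) * (b$i) ^ (k - \<gamma> i) else 0)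
      * (real (\<alpha> i choose k) * (- (b$i)) ^ (\<alpha> i - k)) / fact (\<alpha> i)" for i k
  have sub: "mbox \<alpha> \<subseteq> MI p" using assms mbox_MI unfolding MI_def by blast
  have "dcomp p (Dg p \<gamma> b) \<alpha> b = (\<Sum>\<beta>\<in>MI p. Dg p \<gamma> b \<beta> * smon b \<alpha> \<beta>)"
    unfolding dcomp_def dpair_def by simp
  also have "\<dots> = (\<Sum>\<beta>\<in>mbox \<alpha>. \<Prod>i\<in>UNIV. g i (\<beta> i))"
  proof (rule sum.mono_neutral_cong_right[OF finite_MI sub])
    show "\<forall>\<beta>\<in>MI p - mbox \<alpha>. Dg p \<gamma> b \<beta> * smon b \<alpha> \<beta> = 0"
      unfolding smon_def mbox_def by auto
    fix \<beta> assume "\<beta> \<in> mbox \<alpha>"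
    then have le: "\<forall>i. \<beta> i \<le> \<alpha> i" and bM: "\<beta> \<in> MI p" using sub unfolding mbox_def by auto
    show "Dg p \<gamma> b \<beta> * smon b \<alpha> \<beta> = (\<Prod>i\<in>UNIV. g i (\<beta> i))"
    proof (cases "\<forall>i. \<gamma> i \<le> \<beta> i")
      case True
      have "Dg p \<gamma> b \<beta> * smon b \<alpha> \<beta> = (\<Prod>i\<in>UNIV. fact (\<beta> i) / fact (\<beta> i - \<gamma> i)) * (\<Prod>i\<in>UNIV. (b$i) ^ (\<beta> i - \<gamma> i))
          * (\<Prod>i\<in>UNIV. real (\<alpha> i choose \<beta> i) * (- (b$i)) ^ (\<alpha> i - \<beta> i)) / (\<Prod>i\<in>UNIV. fact (\<alpha> i))"
        unfolding Dg_def smon_def Cg_def mipow_def mifact_def using True le bM by simp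
      also have "\<dots> = (\<Prod>i\<in>UNIV. g i (\<beta> i))"
        unfolding g_def using True by (simp add: prod.distrib[symmetric] prod_dividef[symmetric])
      finally show ?thesis .
    next
      case False
      then obtain j where j: "\<not> \<gamma> j \<le> \<beta> j" by auto
      have "(\<Prod>i\<in>UNIV. g i (\<beta> i)) = 0"
        using j by (intro prod_zero) (auto simp: g_def intro!: bexI[of _ j])
      moreover have "Dg p \<gamma> b \<beta> = 0" unfolding Dg_def by (rule if_not_P) (use False in blast)
      ultimately show ?thesis by simp
    qed
  qed
  also have "\<dots> = (\<Prod>i\<in>UNIV. \<Sum>k\<le>\<alpha> i. g i k)"
    unfolding mbox_PiE by (rule prod_sum_PiE[symmetric]) auto
  also have "\<dots> = (\<Prod>i\<in>UNIV. (if \<alpha> i = \<gamma> i then 1 else 0))"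
    unfolding g_def by (simp only: L1)
  also have "\<dots> = (if \<alpha> = \<gamma> then 1 else 0)"
  proof (cases "\<alpha> = \<gamma>")
    case False
    then obtain j where "\<alpha> j \<noteq> \<gamma> j" by auto
    then show ?thesis using False by (intro trans[OF prod_zero]) (auto intro!: bexI[of _ j])
  qed simp
  finally show ?thesis .
qed



lemma A2:
  fixes a b :: "real^'n::finite"
  assumes "mideg \<alpha> \<le> p"
  shows "Dg p \<alpha> b \<delta> = (\<Sum>\<beta>\<in>MI (p - mideg \<alpha>). mipow (b - a) \<beta> / mifact \<beta> * Dg p (\<lambda>i. \<alpha> i + \<beta> i) a \<delta>)"
proof (cases "\<delta> \<in> MI p \<and> (\<forall>i. \<alpha> i \<le> \<delta> i)")
  case False
  have "Dg p (\<lambda>i. \<alpha> i + \<beta> i) a \<delta> = 0" for \<beta>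
    unfolding Dg_def by (rule if_not_P) (use False add_leD1 in blast)
  moreover have "Dg p \<alpha> b \<delta> = 0"
    unfolding Dg_def by (rule if_not_P) (use False in auto)
  ultimately show ?thesis by simp
next
  case True
  define m where "m i = \<delta> i - \<alpha> i" for i
  define h where "h i k = ((b$i - a$i) ^ k / fact k) * (fact (\<delta> i) / fact (\<delta> i - \<alpha> i - k) * (a$i) ^ (\<delta> i - \<alpha> i - k))" for i k
  have "mideg m = mideg \<delta> - mideg \<alpha>" unfolding m_def using True by (intro mideg_diff) auto
  then have sub: "mbox m \<subseteq> MI (p - mideg \<alpha>)"
    using True by (intro mbox_MI) (auto simp: MI_def)
  have "(\<Sum>\<beta>\<in>MI (p - mideg \<alpha>). mipow (b - a) \<beta> / mifact \<beta> * Dg p (\<lambda>i. \<alpha> i + \<beta> i) a \<delta>)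
      = (\<Sum>\<beta>\<in>mbox m. \<Prod>i\<in>UNIV. h i (\<beta> i))"
  proof (rule sum.mono_neutral_cong_right[OF finite_MI sub])
    show "\<forall>\<beta>\<in>MI (p - mideg \<alpha>) - mbox m. mipow (b - a) \<beta> / mifact \<beta> * Dg p (\<lambda>i. \<alpha> i + \<beta> i) a \<delta> = 0"
    proof
      fix \<beta> assume "\<beta> \<in> MI (p - mideg \<alpha>) - mbox m"
      then obtain j where "\<not> \<beta> j \<le> m j" unfolding mbox_def by auto
      then have "\<not> (\<forall>i. \<alpha> i + \<beta> i \<le> \<delta> i)" unfolding m_def by (metis le_diff_conv2 add.commute True)
      then have "Dg p (\<lambda>i. \<alpha> i + \<beta> i) a \<delta> = 0" unfolding Dg_def by (intro if_not_P) auto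
      then show "mipow (b - a) \<beta> / mifact \<beta> * Dg p (\<lambda>i. \<alpha> i + \<beta> i) a \<delta> = 0" by simp
    qed
    fix \<beta> assume "\<beta> \<in> mbox m"
    have le: "\<forall>i. \<alpha> i + \<beta> i \<le> \<delta> i"
    proof - have "\<beta> i \<le> \<delta> i - \<alpha> i \<and> \<alpha> i \<le> \<delta> i" for i using \<open>\<beta> \<in> mbox m\<close> True unfolding mbox_def m_def by auto
      then show ?thesis by (metis (no_types) add_diff_inverse_nat add_le_cancel_left not_le less_le_trans) qed
    have "mipow (b - a) \<beta> / mifact \<beta> * Dg p (\<lambda>i. \<alpha> i + \<beta> i) a \<delta>
       = (\<Prod>i\<in>UNIV. (b$i - a$i) ^ \<beta> i) / (\<Prod>i\<in>UNIV. fact (\<beta> i)) * ((\<Prod>i\<in>UNIV. fact (\<delta> i) / fact (\<delta> i - (\<alpha> i + \<beta> i)))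
          * (\<Prod>i\<in>UNIV. (a$i) ^ (\<delta> i - (\<alpha> i + \<beta> i))))"
      unfolding Dg_def Cg_def mipow_def mifact_def using le True by simp
    also have "\<dots> = (\<Prod>i\<in>UNIV. h i (\<beta> i))"
      unfolding h_def by (simp add: prod.distrib[symmetric] prod_dividef[symmetric] diff_diff_left)
    finally show "mipow (b - a) \<beta> / mifact \<beta> * Dg p (\<lambda>i. \<alpha> i + \<beta> i) a \<delta> = (\<Prod>i\<in>UNIV. h i (\<beta> i))" .
  qed
  also have "\<dots> = (\<Prod>i\<in>UNIV. \<Sum>k\<le>m i. h i k)"
    unfolding mbox_PiE by (rule prod_sum_PiE[symmetric]) auto
  also have "\<dots> = (\<Prod>i\<in>UNIV. fact (\<delta> i) / fact (\<delta> i - \<alpha> i) * (b$i) ^ (\<delta> i - \<alpha> i))"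
    unfolding h_def m_def using True by (intro prod.cong refl L2) auto
  also have "\<dots> = Dg p \<alpha> b \<delta>"
    unfolding Dg_def Cg_def mipow_def using True by (simp only: prod.distrib[symmetric] if_True) (simp add: field_simps)
  finally show ?thesis by simp
qed



definition Qm :: "'n::finite \<Rightarrow> ('n \<Rightarrow> nat) \<Rightarrow> real^'n \<Rightarrow> real" where
  "Qm i m x = (\<Prod>j\<in>UNIV - {i}. (x$j) ^ (m j))"

lemma mipow_split: "mipow x m = (x$i) ^ (m i) * Qm i m x"
  unfolding mipow_def Qm_def by (rule prod.remove) auto

lemma Qm_shift: "Qm i m (x + h *\<^sub>R axis i 1) = Qm i m x"
  unfolding Qm_def by (intro prod.cong) (auto simp: axis_def)

lemma Qm_cong: "(\<And>j. j \<noteq> i \<Longrightarrow> m j = m' j) \<Longrightarrow> Qm i m x = Qm i m' x"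
  unfolding Qm_def by (intro prod.cong) auto

lemma Qm_tendsto: "(x \<longlongrightarrow> c) F \<Longrightarrow> ((\<lambda>k. Qm i m (x k)) \<longlongrightarrow> Qm i m c) F"
  unfolding Qm_def by (intro tendsto_prod tendsto_power tendsto_vec_nth)

lemma M3:
  fixes x :: "nat \<Rightarrow> real^'n::finite"
  assumes "x \<longlonglongrightarrow> c" "h \<longlonglongrightarrow> 0" "\<And>k. h k \<noteq> 0"
  shows "(\<lambda>k. (mipow (x k + h k *\<^sub>R axis i 1) m - mipow (x k) m) / h k) \<longlonglongrightarrow> real (m i) * (c$i) ^ (m i - 1) * Qm i m c"
proof -
  define n where "n = m i"
  have eq: "(mipow (x k + h k *\<^sub>R axis i 1) m - mipow (x k) m) / h k
      = (\<Sum>j<n. (x k $ i) ^ (n - Suc j) * (x k $ i + h k) ^ j) * Qm i m (x k)" for k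
  proof -
    have xi: "(x k + h k *\<^sub>R axis i 1) $ i = x k $ i + h k" by (simp add: axis_def)
    have "mipow (x k + h k *\<^sub>R axis i 1) m - mipow (x k) m = ((x k $ i + h k) ^ n - (x k $ i) ^ n) * Qm i m (x k)"
      unfolding mipow_split[of _ _ i] Qm_shift xi n_def by (simp add: algebra_simps)
    also have "\<dots> = h k * (\<Sum>j<n. (x k $ i) ^ (n - Suc j) * (x k $ i + h k) ^ j) * Qm i m (x k)"
      by (simp add: power_diff_sumr2)
    finally show ?thesis using assms(3)[of k] by simp
  qed
  have xi: "(\<lambda>k. x k $ i) \<longlonglongrightarrow> c $ i" by (intro tendsto_vec_nth assms)
  have xh: "(\<lambda>k. x k $ i + h k) \<longlonglongrightarrow> c $ i" using tendsto_add[OF xi assms(2)] by simp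
  have "(\<lambda>k. (\<Sum>j<n. (x k $ i) ^ (n - Suc j) * (x k $ i + h k) ^ j) * Qm i m (x k))
      \<longlonglongrightarrow> (\<Sum>j<n. (c $ i) ^ (n - Suc j) * (c $ i) ^ j) * Qm i m c"
    by (intro tendsto_mult tendsto_sum tendsto_power xi xh Qm_tendsto assms(1))
  moreover have "(\<Sum>j<n. (c $ i) ^ (n - Suc j) * (c $ i) ^ j) = real n * (c$i) ^ (n - 1)"
  proof -
    have "(\<Sum>j<n. (c $ i) ^ (n - Suc j) * (c $ i) ^ j) = (\<Sum>j<n. (c $ i) ^ (n - 1))"
      by (intro sum.cong refl) (auto simp: power_add[symmetric])
    then show ?thesis by simp
  qed
  ultimately show ?thesis unfolding eq n_def by simp
qed

lemma A3:
  fixes x :: "nat \<Rightarrow> real^'n::finite"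
  assumes "x \<longlonglongrightarrow> c" "h \<longlonglongrightarrow> 0" "\<And>k. h k \<noteq> 0" "1 \<le> \<gamma>' i"
    and g: "\<gamma> = \<gamma>'(i := \<gamma>' i - 1)"
  shows "(\<lambda>k. (Dg p \<gamma> (x k + h k *\<^sub>R axis i 1) \<delta> - Dg p \<gamma> (x k) \<delta>) / h k) \<longlonglongrightarrow> Dg p \<gamma>' c \<delta>"
proof (cases "\<delta> \<in> MI p \<and> (\<forall>j. \<gamma> j \<le> \<delta> j)")
  case False
  have "\<not> (\<delta> \<in> MI p \<and> (\<forall>j. \<gamma>' j \<le> \<delta> j))"
  proof
    assume H: "\<delta> \<in> MI p \<and> (\<forall>j. \<gamma>' j \<le> \<delta> j)"
    then have "\<gamma> j \<le> \<delta> j" for j using g by (cases "j = i") (auto intro: le_trans[OF diff_le_self])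
    then show False using H False by blast
  qed
  then have "Dg p \<gamma>' c \<delta> = 0" unfolding Dg_def by (rule if_not_P)
  moreover have "Dg p \<gamma> y \<delta> = 0" for y unfolding Dg_def using False by (rule if_not_P)
  ultimately show ?thesis by simp
next
  case True
  define mm where "mm j = \<delta> j - \<gamma> j" for j
  have eq: "(Dg p \<gamma> (x k + h k *\<^sub>R axis i 1) \<delta> - Dg p \<gamma> (x k) \<delta>) / h k
      = Cg \<gamma> \<delta> * ((mipow (x k + h k *\<^sub>R axis i 1) mm - mipow (x k) mm) / h k)" for k
    unfolding Dg_def mm_def using True by (simp add: algebra_simps diff_divide_distrib)
  have lim: "(\<lambda>k. (Dg p \<gamma> (x k + h k *\<^sub>R axis i 1) \<delta> - Dg p \<gamma> (x k) \<delta>) / h k)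
      \<longlonglongrightarrow> Cg \<gamma> \<delta> * (real (mm i) * (c$i) ^ (mm i - 1) * Qm i mm c)"
    unfolding eq by (intro tendsto_mult tendsto_const M3 assms)
  have "Cg \<gamma> \<delta> * (real (mm i) * (c$i) ^ (mm i - 1) * Qm i mm c) = Dg p \<gamma>' c \<delta>"
  proof (cases "\<gamma>' i \<le> \<delta> i")
    case False
    then have "mm i = 0" unfolding mm_def using True g by auto
    moreover have "Dg p \<gamma>' c \<delta> = 0" unfolding Dg_def using False by (intro if_not_P) auto
    ultimately show ?thesis by simp
  next
    case le: True
    have m1: "mm i \<ge> 1" unfolding mm_def using le g assms(4) by auto
    have all: "\<forall>j. \<gamma>' j \<le> \<delta> j" using True g le by (auto split: if_splits)
    have d': "\<delta> j - \<gamma>' j = (if j = i then mm i - 1 else mm j)" for j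
      unfolding mm_def using g assms(4) by auto
    have "mipow c (\<lambda>j. \<delta> j - \<gamma>' j) = (c$i) ^ (mm i - 1) * Qm i mm c"
    proof -
      have "Qm i (\<lambda>j. \<delta> j - \<gamma>' j) c = Qm i mm c" by (rule Qm_cong) (simp add: d')
      then show ?thesis unfolding mipow_split[of _ _ i] using d'[of i] by simp
    qed
    moreover have "Cg \<gamma>' \<delta> = Cg \<gamma> \<delta> * real (mm i)"
    proof -
      have "Cg \<gamma>' \<delta> = fact (\<delta> i) / fact (\<delta> i - \<gamma>' i) * (\<Prod>j\<in>UNIV - {i}. fact (\<delta> j) / fact (\<delta> j - \<gamma>' j))"
        unfolding Cg_def by (rule prod.remove) auto
      also have "(\<Prod>j\<in>UNIV - {i}. fact (\<delta> j) / fact (\<delta> j - \<gamma>' j)) = (\<Prod>j\<in>UNIV - {i}. fact (\<delta> j) / fact (\<delta> j - \<gamma> j))"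
        using g by (intro prod.cong) auto
      also have "fact (\<delta> i) / fact (\<delta> i - \<gamma>' i) = fact (\<delta> i) / fact (\<delta> i - \<gamma> i) * real (mm i)"
      proof -
        have "\<delta> i - \<gamma>' i = mm i - 1" using d'[of i] by simp
        moreover have "fact (mm i) = real (mm i) * fact (mm i - 1)"
          using m1 by (metis Suc_diff_1 fact_Suc le_numeral_extra(2) not_one_le_zero of_nat_Suc zero_less_iff_neq_zero)
        moreover have "\<delta> i - \<gamma> i = mm i" by (simp add: mm_def)
        moreover have "real (mm i) \<noteq> 0" using m1 by simp
        ultimately show ?thesis by (simp add: field_simps del: of_nat_eq_0_iff)
      qed
      also have "Cg \<gamma> \<delta> = fact (\<delta> i) / fact (\<delta> i - \<gamma> i) * (\<Prod>j\<in>UNIV - {i}. fact (\<delta> j) / fact (\<delta> j - \<gamma> j))"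
        unfolding Cg_def by (rule prod.remove) auto
      ultimately show ?thesis by simp
    qed
    ultimately show ?thesis unfolding Dg_def using True all by simp
  qed
  then show ?thesis using lim by simp
qed



lemma nabla_Phk: "nabla p X f = Phk p X f (2 * (rdim p X + 1))"
  unfolding nabla_def Phk_def by simp

lemma bad:
  assumes nf: "nabla_is_function p X f" and k: "k \<le> 2 * (rdim p X + 1)"
    and mem: "(c, (\<lambda>\<beta>. 0), d) \<in> Phk p X f k"
  shows "d = 0"
proof -
  have cX: "c \<in> X" using mem Phk_X by blast
  have "(c, (\<lambda>\<beta>. 0)) \<in> tau p X" unfolding tau_def using E_zero[OF cX] .
  then have "\<exists>!l. (c, (\<lambda>\<beta>. 0), l) \<in> nabla p X f" using nf unfolding nabla_is_function_def by blast
  moreover have "(c, (\<lambda>\<beta>. 0), d) \<in> nabla p X f" unfolding nabla_Phk using Phk_mono[OF k] mem by blast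
  moreover have "(c, (\<lambda>\<beta>. 0), 0) \<in> nabla p X f" unfolding nabla_Phk using Phk_zero[OF cX] by blast
  ultimately show ?thesis by blast
qed

lemma Phk_Suc: "Phk p X f (Suc k) = rhoF p X (Phk p X f k)"
  unfolding Phk_def by simp

lemma core2:
  fixes a b :: "nat \<Rightarrow> real^'n::finite" and \<zeta> :: "nat \<Rightarrow> ('n \<Rightarrow> nat) \<Rightarrow> real"
  assumes nf: "nabla_is_function p X f" and k: "Suc (Suc k) \<le> 2 * (rdim p X + 1)"
    and "c \<in> X" "a \<longlonglongrightarrow> c" "b \<longlonglongrightarrow> c"
    "\<And>j. (a j, b j, \<zeta> j, \<nu> j) \<in> DeltaF p X (Phk p X f (Suc k))"
    "\<And>\<beta>. (\<lambda>j. \<zeta> j \<beta>) \<longlonglongrightarrow> D \<beta>"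
  shows "\<exists>l. (c, D, l) \<in> Phk p X f (Suc (Suc k))"
proof -
  obtain s w where sw: "0 \<le> s" "(c, (\<lambda>\<beta>. s * D \<beta>), w) \<in> rhoF p X (rhoF p X (Phk p X f k))"
      "s = 0 \<longrightarrow> \<bar>w\<bar> = 1"
    using core[of c X a b \<zeta> \<nu> p "Phk p X f k" D] assms unfolding Phk_Suc by blast
  have mem: "(c, (\<lambda>\<beta>. s * D \<beta>), w) \<in> Phk p X f (Suc (Suc k))" using sw(2) unfolding Phk_Suc .
  show ?thesis
  proof (cases "s = 0")
    case True
    then have "w = 0" using bad[OF nf k, of c w] mem by simp
    then show ?thesis using sw(3) True by simp
  next
    case False
    have "(c, (\<lambda>\<beta>. (1 / s) * (s * D \<beta>)), (1 / s) * w) \<in> Phk p X f (Suc (Suc k))"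
      using rhoF_scale[OF sw(2)] unfolding Phk_Suc .
    then show ?thesis using False by auto
  qed
qed

lemma core3:
  fixes a b :: "nat \<Rightarrow> real^'n::finite"
  assumes nf: "nabla_is_function p X f" and k: "Suc (Suc k) \<le> 2 * (rdim p X + 1)"
    and "c \<in> X" "a \<longlonglongrightarrow> c" "b \<longlonglongrightarrow> c"
    "\<And>j. (a j, b j, (\<lambda>\<beta>. 0), \<nu> j) \<in> DeltaF p X (Phk p X f (Suc k))"
    "e > 0" "\<And>j. e \<le> \<bar>\<nu> j\<bar>"
  shows False
proof -
  obtain s w where sw: "(c, (\<lambda>\<beta>. s * 0), w) \<in> rhoF p X (rhoF p X (Phk p X f k))"
      "min e 1 \<le> \<bar>w\<bar>"
    using core[of c X a b "\<lambda>j \<beta>. 0" \<nu> p "Phk p X f k" "\<lambda>\<beta>. 0"] assms unfolding Phk_Suc by blast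
  have mem: "(c, (\<lambda>\<beta>. 0), w) \<in> Phk p X f (Suc (Suc k))" using sw(1) unfolding Phk_Suc by simp
  have "w = 0" using bad[OF nf k mem] .
  then show False using sw(2) \<open>e > 0\<close> by simp
qed

lemma rdim_ge: "p + 1 \<le> rdim p (X :: (real^'n::finite) set)"
proof -
  define g where "g (k::nat) = (\<lambda>j::'n. if j = undefined then k else 0)" for k
  have md: "mideg (g k) = k" for k unfolding mideg_def g_def by simp
  have "card {..p} \<le> card (MI p :: ('n \<Rightarrow> nat) set)"
  proof (rule card_inj_on_le[of g])
    show "inj_on g {..p}" unfolding inj_on_def g_def by (metis)
    show "g ` {..p} \<subseteq> MI p" using md by (auto simp: MI_def)
  qed (rule finite_MI)
  then show ?thesis unfolding rdim_def by simp
qed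



lemma mideg_pos_ex: "mideg \<gamma> \<ge> 1 \<Longrightarrow> \<exists>i. \<gamma> i \<ge> 1"
  unfolding mideg_def by (metis (no_types) less_one not_le sum_nonneg_eq_0_iff finite zero_le not_one_le_zero)

lemma mideg_dec: "1 \<le> \<gamma>' i \<Longrightarrow> mideg (\<gamma>'(i := \<gamma>' i - 1)) + 1 = mideg \<gamma>'"
proof -
  assume H: "1 \<le> \<gamma>' i"
  have "mideg \<gamma>' = \<gamma>' i + (\<Sum>j\<in>UNIV - {i}. \<gamma>' j)" unfolding mideg_def by (rule sum.remove) auto
  moreover have "mideg (\<gamma>'(i := \<gamma>' i - 1)) = (\<gamma>' i - 1) + (\<Sum>j\<in>UNIV - {i}. \<gamma>' j)"
    unfolding mideg_def by (subst sum.remove[of _ i]) (auto intro!: sum.cong)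
  ultimately show ?thesis using H by simp
qed

lemma inv_Suc_tendsto: "(\<lambda>k. 1 / (real k + 1)) \<longlonglongrightarrow> 0"
  using LIMSEQ_inverse_real_of_nat by (simp add: inverse_eq_divide add.commute)

lemma approx_seq:
  fixes x :: "nat \<Rightarrow> 'a::metric_space"
  assumes "\<And>k. dist (x k) c \<le> 1 / (real k + 1)"
  shows "x \<longlonglongrightarrow> c"
proof -
  have "(\<lambda>k. dist (x k) c) \<longlonglongrightarrow> 0"
  proof (rule tendsto_sandwich[of "\<lambda>_. 0" _ _ "\<lambda>k. 1 / (real k + 1)"])
    show "eventually (\<lambda>k. 0 \<le> dist (x k) c) sequentially" by simp
    show "eventually (\<lambda>k. dist (x k) c \<le> 1 / (real k + 1)) sequentially" using assms by simp
    show "((\<lambda>_. 0) \<longlongrightarrow> (0::real)) sequentially" by simp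
    show "(\<lambda>k. 1 / (real k + 1)) \<longlonglongrightarrow> 0" by (rule inv_Suc_tendsto)
  qed
  then show ?thesis by (rule tendsto_dist_iff[THEN iffD2])
qed

lemma deriv_gen:
  fixes X :: "(real^'n::finite) set"
  assumes nf: "nabla_is_function p X f" and cl: "X \<subseteq> closure (interior X)"
    and m: "m < p" and N: "p + 2 \<le> 2 * (rdim p X + 1)"
    and IH: "\<forall>\<gamma>\<in>MI m. \<forall>a\<in>X. \<exists>l. (a, Dg p \<gamma> a, l) \<in> Phk p X f (Suc m)"
    and g': "\<gamma>' \<in> MI (Suc m)" and cX: "c \<in> X"
  shows "\<exists>l. (c, Dg p \<gamma>' c, l) \<in> Phk p X f (Suc (Suc m))"
proof (cases "mideg \<gamma>' \<le> m")
  case True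
  then obtain l where "(c, Dg p \<gamma>' c, l) \<in> Phk p X f (Suc m)" using IH cX by (auto simp: MI_def)
  then show ?thesis using Phk_Suc_mono by blast
next
  case False
  then have md: "mideg \<gamma>' = Suc m" using g' by (auto simp: MI_def)
  then obtain i where i: "1 \<le> \<gamma>' i" using mideg_pos_ex[of \<gamma>'] by auto
  define \<gamma> where "\<gamma> = \<gamma>'(i := \<gamma>' i - 1)"
  have mg: "mideg \<gamma> = m" using mideg_dec[of \<gamma>' i, OF i] md unfolding \<gamma>_def by simp
  have gM: "\<gamma> \<in> MI m" using mg by (simp add: MI_def)
  have gMp: "\<gamma> \<in> MI p" using mg m by (simp add: MI_def)
  have "\<exists>y \<rho>. dist y c < 1 / (real k + 1) \<and> \<rho> > 0 \<and> ball y \<rho> \<subseteq> X" for k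
  proof -
    have "c \<in> closure (interior X)" using cl cX by blast
    moreover have "1 / (real k + 1) > 0" by simp
    ultimately obtain y where y: "y \<in> interior X" "dist y c < 1 / (real k + 1)"
      unfolding closure_approachable by blast
    then obtain \<rho> where "\<rho> > 0" "ball y \<rho> \<subseteq> X" using mem_interior by blast
    then show ?thesis using y by blast
  qed
  then have "\<forall>k. \<exists>y \<rho>. dist y c < 1 / (real k + 1) \<and> \<rho> > 0 \<and> ball y \<rho> \<subseteq> X" by blast
  then have "\<exists>x. \<forall>k. \<exists>\<rho>. dist (x k) c < 1 / (real k + 1) \<and> \<rho> > 0 \<and> ball (x k) \<rho> \<subseteq> X"
    by (rule choice)
  then obtain x where "\<forall>k. \<exists>\<rho>. dist (x k) c < 1 / (real k + 1) \<and> \<rho> > 0 \<and> ball (x k) \<rho> \<subseteq> X" by blast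
  then have "\<exists>\<rho>. \<forall>k. dist (x k) c < 1 / (real k + 1) \<and> \<rho> k > 0 \<and> ball (x k) (\<rho> k) \<subseteq> X"
    by (rule choice)
  then obtain \<rho> where "\<forall>k. dist (x k) c < 1 / (real k + 1) \<and> \<rho> k > 0 \<and> ball (x k) (\<rho> k) \<subseteq> X" by blast
  then have x: "\<And>k. dist (x k) c < 1 / (real k + 1)" and \<rho>: "\<And>k. \<rho> k > 0" "\<And>k. ball (x k) (\<rho> k) \<subseteq> X"
    by auto
  define h where "h k = min (\<rho> k / 2) (1 / (real k + 1))" for k
  have hpos: "h k > 0" for k unfolding h_def using \<rho>(1)[of k] by simp
  have hle1: "h k \<le> 1" for k unfolding h_def by (simp add: min_le_iff_disj)
  define b where "b k = x k + h k *\<^sub>R axis i 1" for k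
  have xc: "x \<longlonglongrightarrow> c" by (rule approx_seq) (use x less_imp_le in blast)
  have h0: "h \<longlonglongrightarrow> 0"
  proof -
    have "dist (h k) 0 \<le> 1 / (real k + 1)" for k
    proof -
      have "dist (h k) 0 = h k" using hpos[of k] by simp
      also have "\<dots> \<le> 1 / (real k + 1)"
        unfolding h_def by simp
      finally show ?thesis .
    qed
    then show ?thesis by (rule approx_seq)
  qed
  have hne: "h k \<noteq> 0" for k using hpos[of k] by simp
  have nax: "norm (axis i (1::real) :: real^'n) = 1" by simp
  have bX: "b k \<in> X" for k
  proof -
    have "dist (x k) (b k) = h k" unfolding b_def dist_norm using hpos[of k] nax by simp
    also have "\<dots> < \<rho> k" unfolding h_def using \<rho>(1)[of k] by (simp add: min_less_iff_disj)
    finally show ?thesis using \<rho>(2)[of k] by auto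
  qed
  have xX: "x k \<in> X" for k using \<rho>(1)[of k] \<rho>(2)[of k] by auto
  have bc: "b \<longlonglongrightarrow> c"
  proof -
    have "(\<lambda>k. x k + h k *\<^sub>R axis i 1) \<longlonglongrightarrow> c + 0 *\<^sub>R axis i 1"
      by (intro tendsto_add tendsto_scaleR xc h0 tendsto_const)
    then show ?thesis unfolding b_def by simp
  qed
  have "\<forall>k. \<exists>l. (x k, Dg p \<gamma> (x k), l) \<in> Phk p X f (Suc m)" using IH gM xX by blast
  then obtain l1 where l1: "\<And>k. (x k, Dg p \<gamma> (x k), l1 k) \<in> Phk p X f (Suc m)" by metis
  have "\<forall>k. \<exists>l. (b k, Dg p \<gamma> (b k), l) \<in> Phk p X f (Suc m)" using IH gM bX by blast
  then obtain l2 where l2: "\<And>k. (b k, Dg p \<gamma> (b k), l2 k) \<in> Phk p X f (Suc m)" by metis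
  have memD: "(x k, b k, (\<lambda>\<beta>. (- 1 / h k) * Dg p \<gamma> (x k) \<beta> + (1 / h k) * Dg p \<gamma> (b k) \<beta>),
      (- 1 / h k) * l1 k + (1 / h k) * l2 k) \<in> DeltaF p X (Phk p X f (Suc m))" for k
  proof (rule DeltaF_I)
    show "x k \<in> X" "b k \<in> X" by (rule xX, rule bX)
    show "(x k, \<lambda>\<beta>. (- 1 / h k) * Dg p \<gamma> (x k) \<beta>, (- 1 / h k) * l1 k) \<in> Phk p X f (Suc m)"
      using rhoF_scale[OF l1[of k, unfolded Phk_Suc]] unfolding Phk_Suc .
    show "(b k, \<lambda>\<beta>. (1 / h k) * Dg p \<gamma> (b k) \<beta>, (1 / h k) * l2 k) \<in> Phk p X f (Suc m)"
      using rhoF_scale[OF l2[of k, unfolded Phk_Suc]] unfolding Phk_Suc .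
    show "\<forall>\<alpha>\<in>MI p. norm (x k - b k) ^ (p - mideg \<alpha>) * \<bar>dcomp p (\<lambda>\<beta>. 1 / h k * Dg p \<gamma> (b k) \<beta>) \<alpha> (b k)\<bar> \<le> 1"
    proof
      fix \<alpha> :: "'n \<Rightarrow> nat" assume aM: "\<alpha> \<in> MI p"
      show "norm (x k - b k) ^ (p - mideg \<alpha>) * \<bar>dcomp p (\<lambda>\<beta>. 1 / h k * Dg p \<gamma> (b k) \<beta>) \<alpha> (b k)\<bar> \<le> 1"
      proof (cases "\<alpha> = \<gamma>")
        case False
        then show ?thesis unfolding dcomp_scale A1[OF aM] by simp
      next
        case True
        have nb: "norm (x k - b k) = h k" unfolding b_def using hpos[of k] nax by simp
        have "norm (x k - b k) ^ (p - mideg \<alpha>) * \<bar>dcomp p (\<lambda>\<beta>. 1 / h k * Dg p \<gamma> (b k) \<beta>) \<alpha> (b k)\<bar>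
            = h k ^ (p - m) / h k" unfolding dcomp_scale A1[OF aM] nb using True mg hpos[of k] by simp
        also have "\<dots> = h k ^ (p - m - 1)"
          using m hne[of k] by (simp add: power_diff)
        also have "\<dots> \<le> 1" using hpos[of k] hle1[of k] by (intro power_le_one) auto
        finally show ?thesis .
      qed
    qed
  qed
  have lim: "(\<lambda>k. (- 1 / h k) * Dg p \<gamma> (x k) \<beta> + (1 / h k) * Dg p \<gamma> (b k) \<beta>) \<longlonglongrightarrow> Dg p \<gamma>' c \<beta>" for \<beta>
  proof -
    have "(\<lambda>k. (Dg p \<gamma> (x k + h k *\<^sub>R axis i 1) \<beta> - Dg p \<gamma> (x k) \<beta>) / h k) \<longlonglongrightarrow> Dg p \<gamma>' c \<beta>"
      by (rule A3[OF xc h0 hne i \<gamma>_def])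
    moreover have "(Dg p \<gamma> (x k + h k *\<^sub>R axis i 1) \<beta> - Dg p \<gamma> (x k) \<beta>) / h k
        = (- 1 / h k) * Dg p \<gamma> (x k) \<beta> + (1 / h k) * Dg p \<gamma> (b k) \<beta>" for k
      unfolding b_def by (simp add: diff_divide_distrib)
    ultimately show ?thesis by simp
  qed
  show ?thesis
    by (rule core2[OF nf _ cX xc bc memD lim]) (use m N in simp)
qed



lemma MI0: "\<gamma> \<in> MI 0 \<Longrightarrow> \<gamma> = (\<lambda>i. 0)"
  unfolding MI_def mideg_def by (auto intro!: ext)

lemma all_derivs:
  fixes X :: "(real^'n::finite) set"
  assumes nf: "nabla_is_function p X f" and cl: "X \<subseteq> closure (interior X)"
    and N: "p + 2 \<le> 2 * (rdim p X + 1)"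
  shows "m \<le> p \<Longrightarrow> \<forall>\<gamma>\<in>MI m. \<forall>a\<in>X. \<exists>l. (a, Dg p \<gamma> a, l) \<in> Phk p X f (Suc m)"
proof (induction m)
  case 0
  show ?case
  proof (intro ballI)
    fix \<gamma> :: "'n \<Rightarrow> nat" and a assume "\<gamma> \<in> MI 0" "a \<in> X"
    then have g: "\<gamma> = (\<lambda>i. 0)" using MI0 by blast
    have "(a, (\<lambda>\<beta>. 1 * delta p a \<beta>), 1 * f a) \<in> Phi0 p X f"
      unfolding Phi0_def using \<open>a \<in> X\<close> by blast
    then have "(a, delta p a, f a) \<in> Phk p X f 0" unfolding Phk_def by simp
    then have "(a, delta p a, f a) \<in> Phk p X f (Suc 0)" using Phk_Suc_mono by blast
    then show "\<exists>l. (a, Dg p \<gamma> a, l) \<in> Phk p X f (Suc 0)" unfolding g Dg_zero by blast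
  qed
next
  case (Suc m)
  then have m: "m < p" and IH: "\<forall>\<gamma>\<in>MI m. \<forall>a\<in>X. \<exists>l. (a, Dg p \<gamma> a, l) \<in> Phk p X f (Suc m)" by auto
  show ?case using deriv_gen[OF nf cl m N IH] by blast
qed

lemma whitney_seq:
  fixes X :: "(real^'n::finite) set" and g :: "(real^'n) \<times> (real^'n) \<Rightarrow> real"
  assumes "\<not> (g \<longlongrightarrow> 0) (at (c, c) within S)"
  shows "\<exists>e>0. \<exists>P. (\<forall>k. P k \<in> S \<and> P k \<noteq> (c, c) \<and> e \<le> \<bar>g (P k)\<bar>) \<and> P \<longlonglongrightarrow> (c, c)"
proof -
  from assms obtain e where e: "e > 0" "\<not> eventually (\<lambda>x. dist (g x) 0 < e) (at (c, c) within S)"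
    unfolding tendsto_iff by blast
  have "\<exists>x. x \<in> S \<and> x \<noteq> (c, c) \<and> dist x (c, c) < 1 / (real k + 1) \<and> e \<le> \<bar>g x\<bar>" for k
  proof -
    have "1 / (real k + 1) > 0" by simp
    moreover have "\<forall>d>0. \<exists>x\<in>S. x \<noteq> (c, c) \<and> dist x (c, c) < d \<and> e \<le> \<bar>g x\<bar>"
      using e(2) unfolding eventually_at by (auto simp: not_less) (meson not_le)
    ultimately show ?thesis by blast
  qed
  then obtain P where P: "\<And>k. P k \<in> S \<and> P k \<noteq> (c, c) \<and> dist (P k) (c, c) < 1 / (real k + 1) \<and> e \<le> \<bar>g (P k)\<bar>"
    by metis
  have "P \<longlonglongrightarrow> (c, c)" by (rule approx_seq) (use P less_imp_le in blast)
  then show ?thesis using P e(1) by blast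
qed



theorem theorem4p21:
  fixes X U :: "(real^'n::finite) set" and f :: "(real^'n) \<Rightarrow> real" and p :: nat
  assumes "open U" and "X \<subseteq> U"
    and "X = U \<inter> closure (interior X)"
    and "nabla_is_function p X f"
  shows "\<exists>F. whitney_field p X F \<and> (\<forall>x\<in>X. F (\<lambda>i. 0) x = f x)"
proof -
  note nf = assms(4)
  have cl: "X \<subseteq> closure (interior X)" using assms(3) by blast
  have N: "p + 2 \<le> 2 * (rdim p X + 1)" using rdim_ge[of p X] by simp
  have D: "\<forall>\<gamma>\<in>MI p. \<forall>a\<in>X. \<exists>l. (a, Dg p \<gamma> a, l) \<in> Phk p X f (Suc p)"
    using all_derivs[OF nf cl N] by blast
  define F where "F \<gamma> a = (if \<gamma> = (\<lambda>i. 0) then f a else SOME l. (a, Dg p \<gamma> a, l) \<in> Phk p X f (Suc p))"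
    for \<gamma> :: "'n \<Rightarrow> nat" and a
  have FM: "(a, Dg p \<gamma> a, F \<gamma> a) \<in> Phk p X f (Suc p)" if "\<gamma> \<in> MI p" "a \<in> X" for \<gamma> a
  proof (cases "\<gamma> = (\<lambda>i. 0)")
    case True
    have "(a, (\<lambda>\<beta>. 1 * delta p a \<beta>), 1 * f a) \<in> Phi0 p X f"
      unfolding Phi0_def using \<open>a \<in> X\<close> by blast
    then have "(a, delta p a, f a) \<in> Phk p X f 0" unfolding Phk_def by simp
    then have "(a, delta p a, f a) \<in> Phk p X f (Suc p)" using Phk_mono[of 0 "Suc p"] by blast
    then show ?thesis using True unfolding F_def by (simp add: Dg_zero)
  next
    case False
    have "\<exists>l. (a, Dg p \<gamma> a, l) \<in> Phk p X f (Suc p)" using D that by blast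
    then have "(a, Dg p \<gamma> a, SOME l. (a, Dg p \<gamma> a, l) \<in> Phk p X f (Suc p)) \<in> Phk p X f (Suc p)"
      by (rule someI_ex)
    then show ?thesis unfolding F_def using False by simp
  qed
  have W: "whitney_field p X F"
    unfolding whitney_field_def
  proof (intro ballI)
    fix c and \<alpha> :: "'n \<Rightarrow> nat" assume cX: "c \<in> X" and aM: "\<alpha> \<in> MI p"
    define q where "q = p - mideg \<alpha>"
    define g where "g = (\<lambda>(a, b). (F \<alpha> b - (\<Sum>\<beta>\<in>MI q. F (\<lambda>i. \<alpha> i + \<beta> i) a * mipow (b - a) \<beta> / mifact \<beta>))
            / norm (b - a) ^ q)"
    define S where "S = {(a, b). a \<in> X \<and> b \<in> X \<and> a \<noteq> b}"
    show "((\<lambda>(a, b). (F \<alpha> b - (\<Sum>\<beta>\<in>MI (p - mideg \<alpha>).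
              F (\<lambda>i. \<alpha> i + \<beta> i) a * mipow (b - a) \<beta> / mifact \<beta>))
            / norm (b - a) ^ (p - mideg \<alpha>)) \<longlongrightarrow> 0)
        (at (c, c) within {(a, b). a \<in> X \<and> b \<in> X \<and> a \<noteq> b})"
      unfolding g_def[symmetric, unfolded q_def] S_def[symmetric]
    proof (rule ccontr)
      assume "\<not> (g \<longlongrightarrow> 0) (at (c, c) within S)"
      then obtain e P where e: "e > 0" and P: "\<And>k. P k \<in> S \<and> P k \<noteq> (c, c) \<and> e \<le> \<bar>g (P k)\<bar>"
        and Pc: "P \<longlonglongrightarrow> (c, c)"
        using whitney_seq by blast
      define a where "a k = fst (P k)" for k
      define b where "b k = snd (P k)" for k
      have ac: "a \<longlonglongrightarrow> c" unfolding a_def using tendsto_fst[OF Pc] by simp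
      have bc: "b \<longlonglongrightarrow> c" unfolding b_def using tendsto_snd[OF Pc] by simp
      have memk: "(a k, b k, (\<lambda>\<beta>. 0), g (a k, b k)) \<in> DeltaF p X (Phk p X f (Suc p))" for k
      proof -
        have Pk: "a k \<in> X" "b k \<in> X" "a k \<noteq> b k" using P[of k] unfolding S_def a_def b_def by auto
        define A where "A = a k"
        define B where "B = b k"
        have AX: "A \<in> X" and BX: "B \<in> X" and AB: "A \<noteq> B" using Pk unfolding A_def B_def by auto
        define t where "t = 1 / norm (B - A) ^ q"
        have npos: "norm (B - A) > 0" using AB by simp
        have tn: "norm (A - B) ^ q * t = 1" unfolding t_def using npos by (simp add: norm_minus_commute)
        have tpos: "t > 0" unfolding t_def using npos by simp
        define w where "w \<beta> = - t * (mipow (B - A) \<beta> / mifact \<beta>)" for \<beta>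
        have sub: "\<beta> \<in> MI q \<Longrightarrow> (\<lambda>i. \<alpha> i + \<beta> i) \<in> MI p" for \<beta>
          using aM unfolding MI_def q_def by (simp add: mideg_add)
        have m1: "(A, (\<lambda>\<delta>. \<Sum>\<beta>\<in>MI q. w \<beta> * Dg p (\<lambda>i. \<alpha> i + \<beta> i) A \<delta>),
                 (\<Sum>\<beta>\<in>MI q. w \<beta> * F (\<lambda>i. \<alpha> i + \<beta> i) A)) \<in> Phk p X f (Suc p)"
          unfolding Phk_Suc
          by (rule rhoF_sum[OF finite_MI _ AX]) (use FM[OF sub AX] in \<open>simp add: Phk_Suc\<close>)
        have m2: "(B, (\<lambda>\<delta>. t * Dg p \<alpha> B \<delta>), t * F \<alpha> B) \<in> Phk p X f (Suc p)"
          using rhoF_scale[OF FM[OF aM BX, unfolded Phk_Suc]] unfolding Phk_Suc .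
        have con: "\<forall>\<gamma>\<in>MI p. norm (A - B) ^ (p - mideg \<gamma>) * \<bar>dcomp p (\<lambda>\<delta>. t * Dg p \<alpha> B \<delta>) \<gamma> B\<bar> \<le> 1"
        proof
          fix \<gamma> :: "'n \<Rightarrow> nat" assume gM: "\<gamma> \<in> MI p"
          show "norm (A - B) ^ (p - mideg \<gamma>) * \<bar>dcomp p (\<lambda>\<delta>. t * Dg p \<alpha> B \<delta>) \<gamma> B\<bar> \<le> 1"
            unfolding dcomp_scale A1[OF gM] using tn tpos by (auto simp: q_def)
        qed
        have dm: "(A, B, (\<lambda>\<delta>. (\<Sum>\<beta>\<in>MI q. w \<beta> * Dg p (\<lambda>i. \<alpha> i + \<beta> i) A \<delta>) + t * Dg p \<alpha> B \<delta>),
             (\<Sum>\<beta>\<in>MI q. w \<beta> * F (\<lambda>i. \<alpha> i + \<beta> i) A) + t * F \<alpha> B) \<in> DeltaF p X (Phk p X f (Suc p))"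
          by (rule DeltaF_I[OF AX BX m1 m2 con])
        have z: "(\<Sum>\<beta>\<in>MI q. w \<beta> * Dg p (\<lambda>i. \<alpha> i + \<beta> i) A \<delta>) + t * Dg p \<alpha> B \<delta> = 0" for \<delta>
        proof -
          have "Dg p \<alpha> B \<delta> = (\<Sum>\<beta>\<in>MI q. mipow (B - A) \<beta> / mifact \<beta> * Dg p (\<lambda>i. \<alpha> i + \<beta> i) A \<delta>)"
            unfolding q_def by (rule A2) (use aM in \<open>simp add: MI_def\<close>)
          then show ?thesis unfolding w_def by (simp add: sum_distrib_left algebra_simps sum_negf)
        qed
        have v: "(\<Sum>\<beta>\<in>MI q. w \<beta> * F (\<lambda>i. \<alpha> i + \<beta> i) A) + t * F \<alpha> B = g (A, B)"
          unfolding g_def w_def t_def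
          by (simp add: sum_distrib_left algebra_simps sum_negf diff_divide_distrib sum_divide_distrib)
        have z': "(\<lambda>\<delta>. (\<Sum>\<beta>\<in>MI q. w \<beta> * Dg p (\<lambda>i. \<alpha> i + \<beta> i) A \<delta>) + t * Dg p \<alpha> B \<delta>) = (\<lambda>\<beta>. 0)"
          by (rule ext) (rule z)
        show ?thesis using dm unfolding z' v unfolding A_def B_def .
      qed
      have "e \<le> \<bar>g (a k, b k)\<bar>" for k using P[of k] unfolding a_def b_def by simp
      then show False
        using core3[OF nf _ cX ac bc memk e] N by simp
    qed
  qed
  moreover have "\<forall>x\<in>X. F (\<lambda>i. 0) x = f x" unfolding F_def by simp
  ultimately show ?thesis by blast
qed

end
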